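(* Let $d\ge1$, $T\ge2$, $p\ge2$. Let $\{X_j\}_{j\ge1}\subset\mathbb R^d$ be a martingale difference sequence with respect to $\{\mathcal F_j\}_{j\ge0}$ with finite conditional covariances $V_j=\mathsf E[X_jX_j^\top\mid\mathcal F_{j-1}]$ and $\sup_j\|X_j\|_\infty\le\varkappa$ a.s. for some $\varkappa>0$. Let $\{B_j\}$ be deterministic $d\times d$ matrices with $\sup_j\|B_j\|_\infty\le B$. Set $Y_T=\sum_{j=1}^TB_jX_j$ and $W_T=\operatorname{diag}\big(\sum_{j=1}^TB_jV_jB_j^\top\big)$ (the diagonal matrix with the same diagonal). Then $$\big(\mathsf E\|Y_T\|_\infty^p\big)^{1/p}\le 4p\log(2dT^2)\Big(\big(\mathsf E\|W_T\|_\infty^{p/2}\big)^{1/p}+B\varkappa\Big).$$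
   Context: For a vector, $\|\cdot\|_\infty$ is the max-norm; for a matrix it is the induced $\ell_\infty$ operator norm (maximum absolute row sum). A martingale difference sequence means $X_j$ is $\mathcal F_j$-measurable, integrable, and $\mathsf E[X_j\mid\mathcal F_{j-1}]=0$. *)

theory Defs
  imports "HOL-Probability.Probability"
begin

definition vnorm_inf :: "real ^ 'd \<Rightarrow> real" where
  "vnorm_inf v = Max (range (\<lambda>i. \<bar>v $ i\<bar>))"

definition mnorm_inf :: "real ^ 'd ^ 'd \<Rightarrow> real" where
  "mnorm_inf A = Max (range (\<lambda>i. \<Sum>k\<in>UNIV. \<bar>A $ i $ k\<bar>))"

definition diag_part :: "real ^ 'd ^ 'd \<Rightarrow> real ^ 'd ^ 'd" where
  "diag_part A = (\<chi> i k. if i = k then A $ i $ k else 0)"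

definition filtration :: "'a measure \<Rightarrow> (nat \<Rightarrow> 'a measure) \<Rightarrow> bool" where
  "filtration M F \<longleftrightarrow> (\<forall>n. subalgebra M (F n)) \<and> (\<forall>n. sets (F n) \<subseteq> sets (F (Suc n)))"

definition mds :: "'a measure \<Rightarrow> (nat \<Rightarrow> 'a measure) \<Rightarrow> (nat \<Rightarrow> 'a \<Rightarrow> real ^ 'd) \<Rightarrow> bool" where
  "mds M F X \<longleftrightarrow> (\<forall>j\<ge>1. X j \<in> borel_measurable (F j) \<and> integrable M (X j) \<and>
      (\<forall>i. AE x in M. real_cond_exp M (F (j - 1)) (\<lambda>y. X j y $ i) x = 0))"

definition cond_cov :: "'a measure \<Rightarrow> (nat \<Rightarrow> 'a measure) \<Rightarrow> (nat \<Rightarrow> 'a \<Rightarrow> real ^ 'd) \<Rightarrow> nat \<Rightarrow> 'a \<Rightarrow> real ^ 'd ^ 'd" where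
  "cond_cov M F X j x = (\<chi> i k. real_cond_exp M (F (j - 1)) (\<lambda>y. X j y $ i * X j y $ k) x)"

end

theory Submission
  imports Defs
begin



lemma exp_quad:
  fixes x :: real assumes "\<bar>x\<bar> \<le> 1" shows "exp x \<le> 1 + x + x^2"
proof (cases "x \<ge> 0")
  case True then show ?thesis using assms exp_bound by auto
next
  case False
  define y where "y = -x"
  have y: "0 \<le> y" "y \<le> 1" using False assms y_def by auto
  have e: "1 + y + y^2/2 \<le> exp y" using y(1) exp_lower_Taylor_quadratic by blast
  have y2: "0 \<le> y^2" by simp
  have q: "0 < 1 - y + y^2"
  proof (cases "y = 1")
    case False then show ?thesis using y y2 by linarith
  qed simp
  have "(1 + y + y^2/2) * (1 - y + y^2) \<le> exp y * (1 - y + y^2)"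
    using e q by (intro mult_right_mono) auto
  moreover have "(1 + y + y^2/2) * (1 - y + y^2) = 1 + y^2/2 + y^3/2 + y^4/2"
    by (simp add: field_simps power2_eq_square power3_eq_cube power4_eq_xxxx)
  moreover have "0 \<le> y^2/2 + y^3/2 + y^4/2" using y by simp
  ultimately have "1 \<le> exp y * (1 - y + y^2)" by linarith
  hence i: "inverse (exp y) * 1 \<le> inverse (exp y) * (exp y * (1 - y + y^2))"
    by (intro mult_left_mono) auto
  have "exp (-y) = inverse (exp y) * 1" by (simp add: exp_minus)
  also have "\<dots> \<le> inverse (exp y) * (exp y * (1 - y + y^2))" by (rule i)
  also have "\<dots> = 1 - y + y^2" by (simp add: mult.assoc[symmetric])
  finally have "exp (-y) \<le> 1 - y + y^2" .
  moreover have "x = -y" "x^2 = y^2" by (auto simp: y_def)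
  ultimately show ?thesis by simp
qed



lemma filt_sub: "filtration M F \<Longrightarrow> subalgebra M (F n)"
  unfolding filtration_def by blast

lemma filt_mono:
  assumes "filtration M F" "m \<le> n" shows "sets (F m) \<subseteq> sets (F n)"
proof -
  have "\<And>k. sets (F k) \<subseteq> sets (F (Suc k))" using assms(1) unfolding filtration_def by blast
  then show ?thesis by (rule lift_Suc_mono_le[of "\<lambda>k. sets (F k)"]) (rule assms(2))
qed

lemma filt_meas:
  assumes "filtration M F" "m \<le> n" "f \<in> borel_measurable (F m)"
  shows "f \<in> borel_measurable (F n)"
proof -
  have s: "space (F m) = space M" "space (F n) = space M"
    using filt_sub[OF assms(1)] unfolding subalgebra_def by blast+
  have "subalgebra (F n) (F m)" unfolding subalgebra_def using s filt_mono[OF assms(1,2)] by simp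
  thus ?thesis using measurable_from_subalg assms(3) by blast
qed

lemma filt_sfs:
  assumes "prob_space M" "filtration M F" shows "sigma_finite_subalgebra M (F n)"
proof -
  have fm: "finite_measure M" using assms(1) by (simp add: prob_space_def)
  show ?thesis
    by (rule finite_measure_subalgebra_is_sigma_finite)
      (simp add: finite_measure_subalgebra_def finite_measure_subalgebra_axioms_def
        filt_sub[OF assms(2)] fm)
qed



lemma supermart:
  fixes D v :: "nat \<Rightarrow> 'a \<Rightarrow> real"
  assumes P: "prob_space M" and filt: "filtration M F"
    and Dm: "\<And>j. j \<ge> 1 \<Longrightarrow> D j \<in> borel_measurable (F j)"
    and Db: "\<And>j. j \<ge> 1 \<Longrightarrow> AE x in M. \<bar>D j x\<bar> \<le> a"
    and D0: "\<And>j. j \<ge> 1 \<Longrightarrow> AE x in M. real_cond_exp M (F (j-1)) (D j) x = 0"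
    and vm: "\<And>j. j \<ge> 1 \<Longrightarrow> v j \<in> borel_measurable (F (j-1))"
    and vD: "\<And>j. j \<ge> 1 \<Longrightarrow> AE x in M. v j x = real_cond_exp M (F (j-1)) (\<lambda>x. (D j x)^2) x"
    and l: "0 \<le> l" "l * a \<le> 1"
  shows "integrable M (\<lambda>x. exp (l * (\<Sum>j=1..n. D j x) - l^2 * (\<Sum>j=1..n. v j x))) \<and>
         (\<integral>x. exp (l * (\<Sum>j=1..n. D j x) - l^2 * (\<Sum>j=1..n. v j x)) \<partial>M) \<le> 1"
proof -
  interpret prob_space M by fact
  have subM: "subalgebra M (F k)" for k using filt_sub[OF filt] .
  have DmM: "D j \<in> borel_measurable M" if "j \<ge> 1" for j
    using measurable_from_subalg[OF subM Dm[OF that]] .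
  have vmM: "v j \<in> borel_measurable M" if "j \<ge> 1" for j
    using measurable_from_subalg[OF subM vm[OF that]] .
  have Dint: "integrable M (D j)" if "j \<ge> 1" for j
    by (rule integrable_const_bound[where B=a]) (use Db[OF that] DmM[OF that] in auto)
  have D2b: "AE x in M. norm ((D j x)^2) \<le> a^2" if "j \<ge> 1" for j
    using Db[OF that]
  proof (rule AE_mp, intro AE_I2 impI)
    fix x assume "\<bar>D j x\<bar> \<le> a"
    then have "\<bar>D j x\<bar>^2 \<le> a^2" by (intro power_mono) auto
    then show "norm ((D j x)^2) \<le> a^2" by simp
  qed
  have D2int: "integrable M (\<lambda>x. (D j x)^2)" if "j \<ge> 1" for j
    by (rule integrable_const_bound[where B="a^2"]) (use D2b[OF that] DmM[OF that] in auto)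
  have vnn: "AE x in M. 0 \<le> v j x" if "j \<ge> 1" for j
  proof -
    interpret S: sigma_finite_subalgebra M "F (j-1)" using filt_sfs[OF P filt] .
    have "AE x in M. 0 \<le> real_cond_exp M (F (j-1)) (\<lambda>x. (D j x)^2) x"
      by (rule S.real_cond_exp_pos) (use DmM[OF that] in auto)
    then show ?thesis using vD[OF that] by eventually_elim simp
  qed
  define Z where "Z n x = exp (l * (\<Sum>j=1..n. D j x) - l^2 * (\<Sum>j=1..n. v j x))" for n x
  have Zm: "Z n \<in> borel_measurable (F n)" for n
  proof -
    have "(\<lambda>x. \<Sum>j=1..n. D j x) \<in> borel_measurable (F n)"
      by (rule borel_measurable_sum) (auto intro: filt_meas[OF filt _ Dm])
    moreover have "(\<lambda>x. \<Sum>j=1..n. v j x) \<in> borel_measurable (F n)"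
      by (rule borel_measurable_sum) (auto intro: filt_meas[OF filt _ vm])
    ultimately show ?thesis unfolding Z_def by measurable
  qed
  have ZmM: "Z n \<in> borel_measurable M" for n using measurable_from_subalg[OF subM Zm] .
  have Zbd: "AE x in M. norm (Z n x) \<le> exp (l * (n * a))" for n
  proof -
    have "AE x in M. \<forall>j\<in>{1..n}. \<bar>D j x\<bar> \<le> a \<and> 0 \<le> v j x"
      by (rule AE_finite_allI) (auto intro: AE_conjI Db vnn)
    then show ?thesis
    proof (rule AE_mp, intro AE_I2 impI)
      fix x assume h: "\<forall>j\<in>{1..n}. \<bar>D j x\<bar> \<le> a \<and> 0 \<le> v j x"
      have "(\<Sum>j=1..n. D j x) \<le> (\<Sum>j=1..n. a)" using h by (intro sum_mono) (meson abs_le_D1)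
      hence s1: "(\<Sum>j=1..n. D j x) \<le> n * a" by simp
      have s2: "0 \<le> (\<Sum>j=1..n. v j x)" using h by (intro sum_nonneg) auto
      have "l * (\<Sum>j=1..n. D j x) - l^2 * (\<Sum>j=1..n. v j x) \<le> l * (n * a)"
        using s1 s2 l(1) by (smt (verit) mult_left_mono zero_le_power2 mult_nonneg_nonneg)
      then show "norm (Z n x) \<le> exp (l * (n * a))" unfolding Z_def by simp
    qed
  qed
  have Zint: "integrable M (Z n)" for n
    by (rule integrable_const_bound[OF Zbd ZmM])
  have "(\<integral>x. Z n x \<partial>M) \<le> 1"
  proof (induction n)
    case 0
    then show ?case unfolding Z_def by simp
  next
    case (Suc n)
    interpret S: sigma_finite_subalgebra M "F n" using filt_sfs[OF P filt] .
    have DbS: "AE x in M. \<bar>D (Suc n) x\<bar> \<le> a" using Db[of "Suc n"] by simp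
    define g where "g x = Z n x * exp (- (l^2 * v (Suc n) x))" for x
    define h where "h x = exp (l * D (Suc n) x)" for x
    have Zs: "Z (Suc n) x = g x * h x" for x
      unfolding Z_def g_def h_def by (simp add: algebra_simps flip: exp_add)
    have gm: "g \<in> borel_measurable (F n)"
      unfolding g_def using Zm[of n] vm[of "Suc n"] by simp
    have hm: "h \<in> borel_measurable M" unfolding h_def using DmM[of "Suc n"] by simp
    have ghint: "integrable M (\<lambda>x. g x * h x)" using Zint[of "Suc n"] by (simp add: Zs[symmetric])
    have ig: "integrable M (\<lambda>x. g x * real_cond_exp M (F n) h x)"
        "(\<integral>x. g x * real_cond_exp M (F n) h x \<partial>M) = (\<integral>x. g x * h x \<partial>M)"
      using S.real_cond_exp_intg[OF ghint gm hm] by auto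
    have hint: "integrable M h"
    proof (rule integrable_const_bound[where B="exp (l*a)"])
      show "AE x in M. norm (h x) \<le> exp (l * a)"
        using DbS by eventually_elim (use l in \<open>auto simp: h_def intro: mult_left_mono abs_le_D1\<close>)
    qed (rule hm)
    define q where "q x = 1 + l * D (Suc n) x + l^2 * (D (Suc n) x)^2" for x
    have qint: "integrable M q" unfolding q_def using Dint[of "Suc n"] D2int[of "Suc n"] by auto
    have hq: "AE x in M. h x \<le> q x"
      using DbS
    proof eventually_elim
      case (elim x)
      have "\<bar>l * D (Suc n) x\<bar> \<le> 1"
        using elim l by (simp add: abs_mult) (smt (verit) mult_left_mono)
      then show ?case unfolding h_def q_def using exp_quad[of "l * D (Suc n) x"]
        by (simp add: power_mult_distrib)
    qed
    have e1: "AE x in M. real_cond_exp M (F n) h x \<le> real_cond_exp M (F n) q x"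
      by (rule S.real_cond_exp_mono[OF hq hint qint])
    have e2: "AE x in M. real_cond_exp M (F n) q x = 1 + l^2 * v (Suc n) x"
    proof -
      have a1: "AE x in M. real_cond_exp M (F n) q x =
          real_cond_exp M (F n) (\<lambda>x. 1 + l * D (Suc n) x) x + real_cond_exp M (F n) (\<lambda>x. l^2 * (D (Suc n) x)^2) x"
        unfolding q_def by (rule S.real_cond_exp_add) (use Dint[of "Suc n"] D2int[of "Suc n"] in auto)
      have a2: "AE x in M. real_cond_exp M (F n) (\<lambda>x. 1 + l * D (Suc n) x) x =
          real_cond_exp M (F n) (\<lambda>x. 1) x + real_cond_exp M (F n) (\<lambda>x. l * D (Suc n) x) x"
        by (rule S.real_cond_exp_add) (use Dint[of "Suc n"] in auto)
      have a3: "AE x in M. real_cond_exp M (F n) (\<lambda>x. 1) x = 1"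
        by (rule S.real_cond_exp_F_meas) auto
      have a4: "AE x in M. real_cond_exp M (F n) (\<lambda>x. l * D (Suc n) x) x = l * real_cond_exp M (F n) (D (Suc n)) x"
        by (rule S.real_cond_exp_cmult) (use Dint[of "Suc n"] in auto)
      have a5: "AE x in M. real_cond_exp M (F n) (\<lambda>x. l^2 * (D (Suc n) x)^2) x = l^2 * real_cond_exp M (F n) (\<lambda>x. (D (Suc n) x)^2) x"
        by (rule S.real_cond_exp_cmult) (use D2int[of "Suc n"] in auto)
      have a6: "AE x in M. real_cond_exp M (F n) (D (Suc n)) x = 0" using D0[of "Suc n"] by simp
      have a7: "AE x in M. v (Suc n) x = real_cond_exp M (F n) (\<lambda>x. (D (Suc n) x)^2) x" using vD[of "Suc n"] by simp
      show ?thesis using a1 a2 a3 a4 a5 a6 a7 by eventually_elim simp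
    qed
    have e3: "AE x in M. g x * real_cond_exp M (F n) h x \<le> Z n x"
      using e1 e2
    proof eventually_elim
      case (elim x)
      have "real_cond_exp M (F n) h x \<le> exp (l^2 * v (Suc n) x)"
        using elim exp_ge_add_one_self[of "l^2 * v (Suc n) x"] by linarith
      then have "g x * real_cond_exp M (F n) h x \<le> g x * exp (l^2 * v (Suc n) x)"
        by (rule mult_left_mono) (simp add: g_def Z_def)
      also have "\<dots> = Z n x" by (simp add: g_def mult.assoc flip: exp_add)
      finally show ?case .
    qed
    have "(\<integral>x. Z (Suc n) x \<partial>M) = (\<integral>x. g x * real_cond_exp M (F n) h x \<partial>M)"
      using ig(2) by (simp add: Zs)
    also have "\<dots> \<le> (\<integral>x. Z n x \<partial>M)"
      by (rule integral_mono_AE[OF ig(1) Zint e3])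
    finally show ?case using Suc.IH by simp
  qed
  then show ?thesis using Zint[of n] unfolding Z_def by simp
qed



lemma vnorm_comp: "\<bar>v $ k\<bar> \<le> vnorm_inf v"
  unfolding vnorm_inf_def by (rule Max_ge) auto

lemma mnorm_row: "(\<Sum>k\<in>UNIV. \<bar>A $ i $ k\<bar>) \<le> mnorm_inf A"
  unfolding mnorm_inf_def by (rule Max_ge) auto

lemma link:
  fixes X :: "nat \<Rightarrow> 'a \<Rightarrow> real ^ 'd" and Bm :: "nat \<Rightarrow> real ^ 'd ^ 'd"
  assumes P: "prob_space M" and filt: "filtration M F" and mds: "mds M F X"
    and XXa: "\<forall>j i k. j \<ge> 1 \<longrightarrow> integrable M (\<lambda>y. X j y $ i * X j y $ k)"
    and Xb: "AE x in M. \<forall>j\<ge>1. vnorm_inf (X j x) \<le> \<kappa>"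
    and Bba: "\<forall>j. j \<ge> 1 \<longrightarrow> mnorm_inf (Bm j) \<le> B"
    and j: "j \<ge> 1" and sg: "\<bar>\<sigma>\<bar> = 1" and kp: "\<kappa> > 0"
  shows "(\<lambda>x. \<sigma> * (Bm j *v X j x) $ i) \<in> borel_measurable (F j)"
    "AE x in M. \<bar>\<sigma> * (Bm j *v X j x) $ i\<bar> \<le> B * \<kappa>"
    "AE x in M. real_cond_exp M (F (j-1)) (\<lambda>x. \<sigma> * (Bm j *v X j x) $ i) x = 0"
    "(\<lambda>x. \<Sum>k\<in>UNIV. \<Sum>l\<in>UNIV. Bm j $ i $ k * Bm j $ i $ l * cond_cov M F X j x $ k $ l)
       \<in> borel_measurable (F (j-1))"
    "AE x in M. (\<Sum>k\<in>UNIV. \<Sum>l\<in>UNIV. Bm j $ i $ k * Bm j $ i $ l * cond_cov M F X j x $ k $ l)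
       = real_cond_exp M (F (j-1)) (\<lambda>x. (\<sigma> * (Bm j *v X j x) $ i)^2) x"
proof -
  have XX: "\<And>j i k. j \<ge> 1 \<Longrightarrow> integrable M (\<lambda>y. X j y $ i * X j y $ k)" using XXa by blast
  have Bb: "\<And>j. j \<ge> 1 \<Longrightarrow> mnorm_inf (Bm j) \<le> B" using Bba by blast
  interpret prob_space M by fact
  interpret S: sigma_finite_subalgebra M "F (j-1)" using filt_sfs[OF P filt] .
  have Xm: "X j \<in> borel_measurable (F j)" and Xi: "integrable M (X j)"
    and X0: "\<And>k. AE x in M. real_cond_exp M (F (j - 1)) (\<lambda>y. X j y $ k) x = 0"
    using mds j unfolding mds_def by auto
  have Xcm: "(\<lambda>x. X j x $ k) \<in> borel_measurable (F j)" for k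
    using measurable_compose[OF Xm borel_measurable_nth] .
  have Xci: "integrable M (\<lambda>x. X j x $ k)" for k
    using integrable_bounded_linear[OF bounded_linear_vec_nth Xi] .
  define c where "c k = \<sigma> * Bm j $ i $ k" for k
  have Deq: "(\<lambda>x. \<sigma> * (Bm j *v X j x) $ i) = (\<lambda>x. \<Sum>k\<in>UNIV. c k * X j x $ k)"
    by (auto simp: c_def matrix_vector_mult_def sum_distrib_left mult.assoc)
  show "(\<lambda>x. \<sigma> * (Bm j *v X j x) $ i) \<in> borel_measurable (F j)"
    unfolding Deq by (intro borel_measurable_sum borel_measurable_times borel_measurable_const Xcm)
  show "AE x in M. \<bar>\<sigma> * (Bm j *v X j x) $ i\<bar> \<le> B * \<kappa>"
    using Xb
  proof eventually_elim
    case (elim x)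
    then have xb: "\<bar>X j x $ k\<bar> \<le> \<kappa>" for k using vnorm_comp[of "X j x" k] j by force
    have "\<bar>\<Sum>k\<in>UNIV. c k * X j x $ k\<bar> \<le> (\<Sum>k\<in>UNIV. \<bar>c k * X j x $ k\<bar>)" by (rule sum_abs)
    also have "\<dots> \<le> (\<Sum>k\<in>UNIV. \<bar>Bm j $ i $ k\<bar> * \<kappa>)"
      by (intro sum_mono) (auto simp: c_def abs_mult sg intro: mult_left_mono xb)
    also have "\<dots> = (\<Sum>k\<in>UNIV. \<bar>Bm j $ i $ k\<bar>) * \<kappa>" by (simp add: sum_distrib_right)
    also have "\<dots> \<le> B * \<kappa>"
      using mnorm_row[of "Bm j" i] Bb[OF j] kp by (intro mult_right_mono) auto
    finally show ?case using fun_cong[OF Deq, of x] by simp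
  qed
  have fi: "integrable M (\<lambda>x. c k * X j x $ k)" for k using Xci by auto
  have "AE x in M. real_cond_exp M (F (j-1)) (\<lambda>x. \<Sum>k\<in>UNIV. c k * X j x $ k) x
      = (\<Sum>k\<in>UNIV. real_cond_exp M (F (j-1)) (\<lambda>x. c k * X j x $ k) x)"
    by (rule S.real_cond_exp_sum) (rule fi)
  moreover have "AE x in M. \<forall>k\<in>UNIV. real_cond_exp M (F (j-1)) (\<lambda>x. c k * X j x $ k) x
       = c k * real_cond_exp M (F (j-1)) (\<lambda>x. X j x $ k) x \<and> real_cond_exp M (F (j - 1)) (\<lambda>y. X j y $ k) x = 0"
    by (intro AE_finite_allI AE_conjI S.real_cond_exp_cmult Xci X0) auto
  ultimately show "AE x in M. real_cond_exp M (F (j-1)) (\<lambda>x. \<sigma> * (Bm j *v X j x) $ i) x = 0"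
    unfolding Deq by eventually_elim simp
  have cc: "cond_cov M F X j x $ k $ l = real_cond_exp M (F (j-1)) (\<lambda>y. X j y $ k * X j y $ l) x" for x k l
    by (simp add: cond_cov_def)
  show "(\<lambda>x. \<Sum>k\<in>UNIV. \<Sum>l\<in>UNIV. Bm j $ i $ k * Bm j $ i $ l * cond_cov M F X j x $ k $ l)
       \<in> borel_measurable (F (j-1))"
    unfolding cc by (intro borel_measurable_sum borel_measurable_times borel_measurable_const borel_measurable_cond_exp)
  define b where "b k l = Bm j $ i $ k * Bm j $ i $ l" for k l
  have D2eq: "(\<lambda>x. (\<sigma> * (Bm j *v X j x) $ i)^2) = (\<lambda>x. \<Sum>k\<in>UNIV. \<Sum>l\<in>UNIV. b k l * (X j x $ k * X j x $ l))"
  proof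
    fix x
    have "(\<sigma> * (Bm j *v X j x) $ i)^2 = ((Bm j *v X j x) $ i) * ((Bm j *v X j x) $ i)"
      using sg by (simp add: power2_eq_square power_mult_distrib)
        (metis abs_mult_self_eq mult.assoc mult.commute mult_1)
    also have "\<dots> = (\<Sum>k\<in>UNIV. \<Sum>l\<in>UNIV. b k l * (X j x $ k * X j x $ l))"
      by (simp add: matrix_vector_mult_def sum_product b_def mult_ac)
    finally show "(\<sigma> * (Bm j *v X j x) $ i)^2 = (\<Sum>k\<in>UNIV. \<Sum>l\<in>UNIV. b k l * (X j x $ k * X j x $ l))" .
  qed
  have gi: "integrable M (\<lambda>x. b k l * (X j x $ k * X j x $ l))" for k l using XX[OF j] by auto
  have gsi: "integrable M (\<lambda>x. \<Sum>l\<in>UNIV. b k l * (X j x $ k * X j x $ l))" for k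
    by (rule Bochner_Integration.integrable_sum, rule gi)
  have "AE x in M. real_cond_exp M (F (j-1)) (\<lambda>x. \<Sum>k\<in>UNIV. \<Sum>l\<in>UNIV. b k l * (X j x $ k * X j x $ l)) x
      = (\<Sum>k\<in>UNIV. real_cond_exp M (F (j-1)) (\<lambda>x. \<Sum>l\<in>UNIV. b k l * (X j x $ k * X j x $ l)) x)"
    by (rule S.real_cond_exp_sum) (rule gsi)
  moreover have "AE x in M. \<forall>k\<in>UNIV. real_cond_exp M (F (j-1)) (\<lambda>x. \<Sum>l\<in>UNIV. b k l * (X j x $ k * X j x $ l)) x
      = (\<Sum>l\<in>UNIV. real_cond_exp M (F (j-1)) (\<lambda>x. b k l * (X j x $ k * X j x $ l)) x)"
    by (intro AE_finite_allI S.real_cond_exp_sum gi) auto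
  moreover have "AE x in M. \<forall>k\<in>UNIV. \<forall>l\<in>UNIV. real_cond_exp M (F (j-1)) (\<lambda>x. b k l * (X j x $ k * X j x $ l)) x
      = b k l * real_cond_exp M (F (j-1)) (\<lambda>x. X j x $ k * X j x $ l) x"
    by (intro AE_finite_allI S.real_cond_exp_cmult XX j) auto
  ultimately show "AE x in M. (\<Sum>k\<in>UNIV. \<Sum>l\<in>UNIV. Bm j $ i $ k * Bm j $ i $ l * cond_cov M F X j x $ k $ l)
       = real_cond_exp M (F (j-1)) (\<lambda>x. (\<sigma> * (Bm j *v X j x) $ i)^2) x"
    unfolding D2eq cc b_def[symmetric] by eventually_elim simp
qed



lemma kexists:
  fixes r :: real
  shows "1 < r \<Longrightarrow> r \<le> 2^n \<Longrightarrow> \<exists>k. 1 \<le> k \<and> k \<le> n \<and> 2^(k-1) < r \<and> r \<le> 2^k"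
proof (induction n)
  case 0 then show ?case by simp
next
  case (Suc n)
  show ?case
  proof (cases "r \<le> 2^n")
    case True
    then obtain k where "1 \<le> k \<and> k \<le> n \<and> 2^(k-1) < r \<and> r \<le> 2^k" using Suc by blast
    then show ?thesis by (intro exI[of _ k]) auto
  next
    case False
    then show ?thesis using Suc.prems by (intro exI[of _ "Suc n"]) auto
  qed
qed

lemma two_pow_ge: "real T \<le> 2 ^ (T - 1)"
proof (induction T)
  case 0 then show ?case by simp
next
  case (Suc T)
  show ?case
  proof (cases T)
    case 0 then show ?thesis by simp
  next
    case (Suc m)
    have "real (Suc T) \<le> 2 * real T" using Suc by simp
    also have "\<dots> \<le> 2 * 2^(T-1)" using Suc.IH by simp
    also have "\<dots> = 2 ^ (Suc T - 1)" using Suc by simp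
    finally show ?thesis .
  qed
qed

lemma pw:
  fixes s A As a l :: real and T :: nat
  assumes a: "a > 0" and As: "0 \<le> As" "A \<le> As"
    and hS: "\<bar>s\<bar> \<le> T * a" and T1: "T \<ge> 1"
    and hG: "\<And>k. k < T \<Longrightarrow> (1 / (a * 2^k)) * \<bar>s\<bar> - (1 / (a * 2^k))^2 * A \<le> l"
  shows "\<bar>s\<bar> \<le> (sqrt As + a) * (1 + 2 * max 0 l)"
proof -
  define L where "L = max 0 l"
  have L0: "0 \<le> L" and lL: "l \<le> L" unfolding L_def by auto
  have key: "\<bar>s\<bar> \<le> As / (a * 2^k) + L * (a * 2^k)" if k: "k < T" for k
  proof -
    define t where "t = a * 2^k"
    have t: "t > 0" unfolding t_def using a by simp
    have "(1 / t) * \<bar>s\<bar> - (1 / t)^2 * A \<le> L" using hG[OF k] lL unfolding t_def by linarith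
    then have "((1 / t) * \<bar>s\<bar> - (1 / t)^2 * A) * t \<le> L * t" using t by (intro mult_right_mono) auto
    moreover have "((1 / t) * \<bar>s\<bar> - (1 / t)^2 * A) * t = \<bar>s\<bar> - A / t"
      using t by (simp add: field_simps power2_eq_square)
    moreover have "A / t \<le> As / t" using As t by (intro divide_right_mono) auto
    ultimately show ?thesis unfolding t_def by linarith
  qed
  define q where "q = sqrt As"
  have q0: "0 \<le> q" and qq: "q * q = As" using As unfolding q_def by auto
  consider (c1) "As \<le> a^2" | (c3) "(T*a)^2 \<le> As" | (c2) "a^2 < As" "As < (T*a)^2" by linarith
  then show ?thesis
  proof cases
    case c1
    have "\<bar>s\<bar> \<le> As / (a * 2^0) + L * (a * 2^0)" using key[of 0] T1 by simp
    also have "As / (a * 2^0) \<le> a" using c1 a by (simp add: divide_simps power2_eq_square)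
    hence "As / (a * 2^0) + L * (a * 2^0) \<le> a + L * a" by simp
    also have "a + L * a \<le> a * (1 + 2 * L)" using L0 a by (simp add: algebra_simps)
    also have "\<dots> \<le> (q + a) * (1 + 2 * L)" using q0 L0 by (intro mult_right_mono) auto
    finally show ?thesis unfolding q_def L_def .
  next
    case c3
    have Ta: "0 \<le> T * a" using a by simp
    have "\<bar>s\<bar> \<le> T * a" by (rule hS)
    also have "T * a = sqrt ((T * a)^2)" using Ta by simp
    also have "\<dots> \<le> q" unfolding q_def using c3 by (rule real_sqrt_le_mono)
    also have "q \<le> (q + a) * (1 + 2 * L)" using q0 L0 a
      by (simp add: algebra_simps)
    finally show ?thesis unfolding q_def L_def .
  next
    case c2
    have aq: "a < q" unfolding q_def using c2(1) a
      by (metis abs_of_pos real_sqrt_abs real_sqrt_less_mono)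
    have qT: "q < T * a" unfolding q_def using c2(2) a
      by (metis abs_of_nonneg mult_nonneg_nonneg of_nat_0_le_iff less_imp_le real_sqrt_abs real_sqrt_less_mono)
    define r where "r = q / a"
    have r1: "1 < r" unfolding r_def using aq a by simp
    have "r < T" unfolding r_def using qT a by (simp add: divide_simps mult.commute)
    also have "real T \<le> 2^(T-1)" by (rule two_pow_ge)
    finally obtain k where k: "1 \<le> k" "k \<le> T - 1" "2^(k-1) < r" "r \<le> 2^k"
      using kexists[OF r1] by (meson less_imp_le)
    have kT: "k < T" using k T1 by linarith
    have qk: "q \<le> a * 2^k" using k(4) a unfolding r_def by (simp add: divide_simps mult.commute)
    have qk2: "a * 2^(k-1) < q" using k(3) a unfolding r_def by (simp add: divide_simps mult.commute)
    have "a * 2^k = 2 * (a * 2^(k-1))" using k(1)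
      by (metis (no_types) Suc_diff_1 less_le_trans mult.left_commute power_Suc zero_less_one)
    also have "\<dots> \<le> 2 * q" using qk2 by simp
    finally have ak: "a * 2^k \<le> 2 * q" .
    have pos: "0 < a * 2^k" using a by simp
    have "As / (a * 2^k) = q * (q / (a * 2^k))" using qq by simp
    also have "\<dots> \<le> q * 1" using qk pos q0 by (intro mult_left_mono) (auto simp: divide_simps)
    finally have t1: "As / (a * 2^k) \<le> q" by simp
    have t2: "L * (a * 2^k) \<le> L * (2 * q)" using ak L0 by (rule mult_left_mono)
    have "\<bar>s\<bar> \<le> q + L * (2 * q)" using key[OF kT] t1 t2 by linarith
    also have "\<dots> = q * (1 + 2 * L)" by (simp add: algebra_simps)
    also have "\<dots> \<le> (q + a) * (1 + 2 * L)" using a L0 by (intro mult_right_mono) auto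
    finally show ?thesis unfolding q_def L_def .
  qed
qed



lemma powr_superadd:
  fixes x y p :: real assumes "0 \<le> x" "0 \<le> y" "1 \<le> p"
  shows "x powr p + y powr p \<le> (x + y) powr p"
proof -
  have "x powr p = x * x powr (p - 1)" using powr_mult_base[OF assms(1), of "p-1"] by simp
  also have "\<dots> \<le> x * (x + y) powr (p - 1)"
    using assms by (intro mult_left_mono powr_mono2) auto
  finally have 1: "x powr p \<le> x * (x + y) powr (p - 1)" .
  have "y powr p = y * y powr (p - 1)" using powr_mult_base[OF assms(2), of "p-1"] by simp
  also have "\<dots> \<le> y * (x + y) powr (p - 1)"
    using assms by (intro mult_left_mono powr_mono2) auto
  finally have 2: "y powr p \<le> y * (x + y) powr (p - 1)" .
  have "x * (x + y) powr (p - 1) + y * (x + y) powr (p - 1) = (x + y) * (x + y) powr (p - 1)"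
    by (simp add: algebra_simps)
  also have "\<dots> = (x + y) powr p" using powr_mult_base[of "x+y" "p-1"] assms by simp
  finally show ?thesis using 1 2 by linarith
qed

lemma max_powr_le: "0 \<le> (u::real) \<Longrightarrow> 0 \<le> v \<Longrightarrow> max u v powr p \<le> u powr p + v powr p"
  using powr_ge_zero[of u p] powr_ge_zero[of v p] by (cases "u \<le> v") (auto simp: max_def)

lemma assemble:
  fixes Ys Wn G :: "'a \<Rightarrow> real"
  assumes P: "prob_space M"
    and m: "Ys \<in> borel_measurable M" "Wn \<in> borel_measurable M"
    and a: "a > 0" and p: "p \<ge> 1" and c: "c \<ge> 0" and G0: "G0 > 0" and C0: "0 \<le> C0"
    and Ysb: "AE x in M. 0 \<le> Ys x \<and> Ys x \<le> C0"
    and Wb: "AE x in M. 0 \<le> Wn x \<and> Wn x \<le> Wmax"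
    and Gi: "integrable M G" and GN: "(\<integral>x. G x \<partial>M) \<le> N"
    and Gnn: "AE x in M. 0 \<le> G x"
    and pwb: "AE x in M. G x \<le> G0 \<longrightarrow> Ys x \<le> (sqrt (Wn x) + a) * c"
    and C0N: "C0 powr p * N / G0 \<le> a powr p"
  shows "(\<integral>x. Ys x powr p \<partial>M) powr (1 / p) \<le> (2 * c + 1) * ((\<integral>x. Wn x powr (p / 2) \<partial>M) powr (1 / p) + a)"
proof -
  interpret prob_space M by fact
  have Ysp: "AE x in M. Ys x powr p \<le> (2 * c) powr p * (Wn x powr (p / 2) + a powr p) + C0 powr p / G0 * G x"
    using Ysb Wb pwb Gnn
  proof eventually_elim
    case (elim x)
    have W0: "0 \<le> Wn x" and Y0: "0 \<le> Ys x" using elim by auto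
    have rest: "0 \<le> C0 powr p / G0 * G x" using elim G0 by simp
    show ?case
    proof (cases "G x \<le> G0")
      case True
      define u where "u = sqrt (Wn x)"
      have u0: "0 \<le> u" using W0 unfolding u_def by simp
      have up: "u powr p = Wn x powr (p / 2)"
        using W0 unfolding u_def by (simp add: powr_half_sqrt[symmetric] powr_powr)
      have "Ys x \<le> (u + a) * c" using elim True unfolding u_def by auto
      also have "\<dots> \<le> (2 * max u a) * c" using c by (intro mult_right_mono) auto
      finally have "Ys x \<le> 2 * c * max u a" by (simp add: mult_ac)
      then have "Ys x powr p \<le> (2 * c * max u a) powr p" using Y0 p by (intro powr_mono2) auto
      also have "\<dots> = (2 * c) powr p * max u a powr p" using c u0 a by (simp add: powr_mult)
      also have "\<dots> \<le> (2 * c) powr p * (u powr p + a powr p)"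
        using u0 a by (intro mult_left_mono max_powr_le) auto
      finally show ?thesis using rest up by simp
    next
      case False
      have "Ys x powr p \<le> C0 powr p" using elim p by (intro powr_mono2) auto
      also have "\<dots> \<le> C0 powr p / G0 * G x"
        using False G0 by (simp add: divide_simps) (intro mult_left_mono, auto)
      finally have "Ys x powr p \<le> C0 powr p / G0 * G x" .
      moreover have "0 \<le> (2 * c) powr p * (Wn x powr (p / 2) + a powr p)" by simp
      ultimately show ?thesis by linarith
    qed
  qed
  have Ypi: "integrable M (\<lambda>x. Ys x powr p)"
  proof (rule integrable_const_bound[where B="C0 powr p"])
    show "AE x in M. norm (Ys x powr p) \<le> C0 powr p"
      using Ysb by eventually_elim (use p in \<open>auto intro: powr_mono2\<close>)
  qed (use m in measurable)
  have Wpi: "integrable M (\<lambda>x. Wn x powr (p / 2))"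
  proof (rule integrable_const_bound[where B="Wmax powr (p / 2)"])
    show "AE x in M. norm (Wn x powr (p / 2)) \<le> Wmax powr (p / 2)"
      using Wb by eventually_elim (use p in \<open>auto intro: powr_mono2\<close>)
  qed (use m in measurable)
  define IW where "IW = (\<integral>x. Wn x powr (p / 2) \<partial>M)"
  have IW0: "0 \<le> IW" unfolding IW_def by (intro integral_nonneg_AE) auto
  have "(\<integral>x. Ys x powr p \<partial>M) \<le> (\<integral>x. (2 * c) powr p * (Wn x powr (p / 2) + a powr p) + C0 powr p / G0 * G x \<partial>M)"
    using Ypi Wpi Gi Ysp by (intro integral_mono_AE) auto
  also have "\<dots> = (2 * c) powr p * (IW + a powr p) + C0 powr p / G0 * (\<integral>x. G x \<partial>M)"
    using Wpi Gi unfolding IW_def by (simp add: prob_space)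
  also have "\<dots> \<le> (2 * c) powr p * (IW + a powr p) + C0 powr p / G0 * N"
    using GN G0 by (intro add_left_mono mult_left_mono) auto
  also have "\<dots> \<le> (2 * c) powr p * (IW + a powr p) + a powr p"
    using C0N by (simp add: mult.commute)
  also have "\<dots> \<le> ((2 * c) powr p + 1) * (IW + a powr p)"
    using IW0 by (simp add: algebra_simps)
  finally have I1: "(\<integral>x. Ys x powr p \<partial>M) \<le> ((2 * c) powr p + 1) * (IW + a powr p)" .
  define w where "w = IW powr (1 / p)"
  have w0: "0 \<le> w" unfolding w_def by simp
  have ww: "w powr p = IW" unfolding w_def using IW0 p by (simp add: powr_powr)
  have "IW + a powr p \<le> (w + a) powr p" unfolding ww[symmetric]
    using w0 a p by (intro powr_superadd) auto
  moreover have "(2 * c) powr p + 1 \<le> (2 * c + 1) powr p"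
    using powr_superadd[of "2*c" 1 p] c p by simp
  ultimately have "((2 * c) powr p + 1) * (IW + a powr p) \<le> (2 * c + 1) powr p * (w + a) powr p"
    using IW0 by (intro mult_mono) auto
  also have "\<dots> = ((2 * c + 1) * (w + a)) powr p" using c w0 a by (simp add: powr_mult)
  finally have I2: "(\<integral>x. Ys x powr p \<partial>M) \<le> ((2 * c + 1) * (w + a)) powr p" using I1 by linarith
  have I0: "0 \<le> (\<integral>x. Ys x powr p \<partial>M)" by (intro integral_nonneg_AE) auto
  have "(\<integral>x. Ys x powr p \<partial>M) powr (1 / p) \<le> (((2 * c + 1) * (w + a)) powr p) powr (1 / p)"
    using I0 I2 p by (intro powr_mono2) auto
  also have "\<dots> = (2 * c + 1) * (w + a)" using c w0 a p by (simp add: powr_powr)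
  finally show ?thesis unfolding w_def IW_def .
qed



lemma mnorm_nonneg: "0 \<le> mnorm_inf A"
proof -
  have "0 \<le> (\<Sum>k\<in>UNIV. \<bar>A $ undefined $ k\<bar>)" by (simp add: sum_nonneg)
  then show ?thesis using mnorm_row[of A undefined] by linarith
qed

lemma vnorm_zero: "vnorm_inf (0 :: real ^ 'd) = 0"
  unfolding vnorm_inf_def by simp

lemma mnorm_diag: "mnorm_inf (diag_part A) = Max (range (\<lambda>i. \<bar>A $ i $ i\<bar>))"
proof -
  have "(\<Sum>k\<in>UNIV. \<bar>diag_part A $ i $ k\<bar>) = \<bar>A $ i $ i\<bar>" for i
    unfolding diag_part_def by (simp add: if_distrib[of abs] cong: if_cong)
  then show ?thesis unfolding mnorm_inf_def by simp
qed

lemma diag_entry: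
  fixes B C :: "real ^ 'd ^ 'd"
  shows "(B ** C ** transpose B) $ i $ i = (\<Sum>k\<in>UNIV. \<Sum>l\<in>UNIV. B $ i $ k * B $ i $ l * C $ k $ l)"
  unfolding matrix_matrix_mult_def transpose_def
  apply (simp add: sum_distrib_right sum_distrib_left mult_ac)
  apply (subst sum.swap)
  apply (simp add: mult_ac)
  done

lemma ln2_ge: "3/8 \<le> ln (2::real)"
proof -
  have "exp (3/8) \<le> 1 + 3/8 + (3/8::real)^2" by (rule exp_bound) auto
  also have "\<dots> \<le> 2" by (simp add: power2_eq_square)
  finally have "exp (3/8) \<le> (2::real)" .
  then have "ln (exp (3/8)) \<le> ln (2::real)" by (subst ln_le_cancel_iff) auto
  then show ?thesis by simp
qed


lemma const_ineq:
  fixes p d T :: real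
  assumes p: "p \<ge> 2" and d: "d \<ge> 1" and T: "T \<ge> 2"
  shows "3 + 4 * ln (2 * d * T * T powr p) \<le> 4 * p * ln (2 * d * T^2)"
proof -
  have l2: "3/8 \<le> ln (2::real)" by (rule ln2_ge)
  have ld: "0 \<le> ln d" using d by simp
  have lT: "ln 2 \<le> ln T" using T by simp
  have e1: "ln (2 * d * T * T powr p) = ln 2 + ln d + ln T + p * ln T"
    using d T by (simp add: ln_mult_pos)
  have e2: "ln (2 * d * T^2) = ln 2 + ln d + 2 * ln T"
    using d T by (simp add: ln_mult_pos ln_realpow)
  have h1: "ln 2 \<le> p * ln 2 - ln 2"
  proof -
    have "1 * ln 2 \<le> (p - 1) * ln (2::real)" using p l2 by (intro mult_right_mono) auto
    then show ?thesis by (simp add: algebra_simps)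
  qed
  have h2: "0 \<le> p * ln d - ln d"
  proof -
    have "0 \<le> (p - 1) * ln d" using p ld by simp
    then show ?thesis by (simp add: algebra_simps)
  qed
  have h3: "ln T \<le> p * ln T - ln T"
  proof -
    have "1 * ln T \<le> (p - 1) * ln T" using p lT l2 by (intro mult_right_mono) auto
    then show ?thesis by (simp add: algebra_simps)
  qed
  have e3: "4 * p * (ln 2 + ln d + 2 * ln T) = 4 * (p * ln 2) + 4 * (p * ln d) + 8 * (p * ln T)"
    by (simp add: algebra_simps)
  have e4: "3 + 4 * (ln 2 + ln d + ln T + p * ln T) = 3 + 4 * ln 2 + 4 * ln d + 4 * ln T + 4 * (p * ln T)"
    by (simp add: algebra_simps)
  show ?thesis unfolding e1 e2 e3 e4 using h1 h2 h3 l2 lT by linarith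
qed

theorem lemmaD8:
  fixes M :: "'a measure" and F :: "nat \<Rightarrow> 'a measure"
    and X :: "nat \<Rightarrow> 'a \<Rightarrow> real ^ 'd" and Bm :: "nat \<Rightarrow> real ^ 'd ^ 'd"
    and T :: nat and p \<kappa> B :: real
  assumes "prob_space M"
    and "filtration M F"
    and "mds M F X"
    and "\<And>j i k. j \<ge> 1 \<Longrightarrow> integrable M (\<lambda>y. X j y $ i * X j y $ k)"
    and "\<kappa> > 0"
    and "AE x in M. \<forall>j\<ge>1. vnorm_inf (X j x) \<le> \<kappa>"
    and "\<And>j. j \<ge> 1 \<Longrightarrow> mnorm_inf (Bm j) \<le> B"
    and "T \<ge> 2" and "p \<ge> 2"
  shows "(\<integral>x. vnorm_inf (\<Sum>j=1..T. Bm j *v X j x) powr p \<partial>M) powr (1 / p)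
     \<le> 4 * p * ln (2 * real CARD('d) * real T ^ 2) *
        ((\<integral>x. mnorm_inf (diag_part (\<Sum>j=1..T. Bm j ** cond_cov M F X j x ** transpose (Bm j)))
              powr (p / 2) \<partial>M) powr (1 / p) + B * \<kappa>)"
proof -
  note P = assms(1) and filt = assms(2) and mds = assms(3) and XX = assms(4) and kp = assms(5)
    and Xb = assms(6) and Bb = assms(7) and T2 = assms(8) and p2 = assms(9)
  interpret prob_space M by (rule P)
  have B0: "0 \<le> B" using Bb[of 1] mnorm_nonneg[of "Bm 1"] by simp
  define Wn where "Wn x = mnorm_inf (diag_part (\<Sum>j=1..T. Bm j ** cond_cov M F X j x ** transpose (Bm j)))" for x
  define Ys where "Ys x = vnorm_inf (\<Sum>j=1..T. Bm j *v X j x)" for x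
  define d where "d = real CARD('d)"
  have d1: "1 \<le> d" unfolding d_def
    by (metis One_nat_def Suc_leI of_nat_1 of_nat_le_iff zero_less_card_finite)
  define L where "L = ln (2 * d * real T ^ 2)"
  have T2r: "2 \<le> real T" using T2 by simp
  have "1 \<le> real T ^ 2" using T2r by (intro one_le_power) auto
  then have "1 * 1 \<le> (2 * d) * real T ^ 2" using d1 by (intro mult_mono) auto
  then have L0: "0 \<le> L" unfolding L_def by (intro ln_ge_zero) simp
  have IW0: "0 \<le> (\<integral>x. Wn x powr (p / 2) \<partial>M) powr (1 / p)" by simp
  have goal_eq: "?thesis \<longleftrightarrow> (\<integral>x. Ys x powr p \<partial>M) powr (1 / p)
      \<le> 4 * p * L * ((\<integral>x. Wn x powr (p / 2) \<partial>M) powr (1 / p) + B * \<kappa>)"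
    unfolding Ys_def Wn_def L_def d_def by simp
  show ?thesis
  proof (cases "B = 0")
    case True
    have Bz: "Bm j = 0" if "j \<ge> 1" for j
    proof -
      have "Bm j $ i $ k = 0" for i k
      proof -
        have "\<bar>Bm j $ i $ k\<bar> \<le> (\<Sum>k\<in>UNIV. \<bar>Bm j $ i $ k\<bar>)"
          by (rule member_le_sum) auto
        also have "\<dots> \<le> 0" using mnorm_row[of "Bm j" i] Bb[OF that] True by simp
        finally show ?thesis by simp
      qed
      then show ?thesis by (simp add: vec_eq_iff)
    qed
    have "Ys x = 0" for x
    proof -
      have "(\<Sum>j=1..T. Bm j *v X j x) = 0" using Bz by (intro sum.neutral) auto
      then show ?thesis unfolding Ys_def by (simp add: vnorm_zero)
    qed
    then have "(\<integral>x. Ys x powr p \<partial>M) powr (1 / p) = 0" by simp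
    moreover have "0 \<le> 4 * p * L * ((\<integral>x. Wn x powr (p / 2) \<partial>M) powr (1 / p) + B * \<kappa>)"
      using p2 L0 IW0 B0 kp by simp
    ultimately show ?thesis unfolding goal_eq by simp
  next
    case False
    define a where "a = B * \<kappa>"
    have a: "0 < a" using False B0 kp unfolding a_def by simp
    define D where "D i \<sigma> j x = \<sigma> * (Bm j *v X j x) $ i" for i and \<sigma> :: real and j x
    define vv where "vv i j x = (\<Sum>k\<in>UNIV. \<Sum>l\<in>UNIV. Bm j $ i $ k * Bm j $ i $ l * cond_cov M F X j x $ k $ l)" for i j x
    have XXa: "\<forall>j i k. j \<ge> 1 \<longrightarrow> integrable M (\<lambda>y. X j y $ i * X j y $ k)" using XX by blast
    have Bba: "\<forall>j. j \<ge> 1 \<longrightarrow> mnorm_inf (Bm j) \<le> B" using Bb by blast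
    note lk = link[OF P filt mds XXa Xb Bba _ _ kp]
    define lam where "lam k = 1 / (a * 2^k)" for k :: nat
    define E where "E k i \<sigma> x = exp (lam k * (\<Sum>j=1..T. D i \<sigma> j x) - (lam k)^2 * (\<Sum>j=1..T. vv i j x))" for k i \<sigma> x
    have Eint: "integrable M (E k i \<sigma>) \<and> (\<integral>x. E k i \<sigma> x \<partial>M) \<le> 1" if sg: "\<sigma> \<in> {-1, 1}" for k i \<sigma>
    proof -
      have sg': "\<bar>\<sigma>\<bar> = 1" using sg by auto
      have h1: "\<And>j. j \<ge> 1 \<Longrightarrow> D i \<sigma> j \<in> borel_measurable (F j)"
        unfolding D_def using lk(1)[OF _ sg'] by simp
      have h2: "\<And>j. j \<ge> 1 \<Longrightarrow> AE x in M. \<bar>D i \<sigma> j x\<bar> \<le> a"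
        unfolding D_def a_def using lk(2)[OF _ sg'] by simp
      have h3: "\<And>j. j \<ge> 1 \<Longrightarrow> AE x in M. real_cond_exp M (F (j-1)) (D i \<sigma> j) x = 0"
        unfolding D_def using lk(3)[OF _ sg'] by simp
      have h4: "\<And>j. j \<ge> 1 \<Longrightarrow> vv i j \<in> borel_measurable (F (j-1))"
        unfolding vv_def using lk(4)[OF _ sg'] by simp
      have h5: "\<And>j. j \<ge> 1 \<Longrightarrow> AE x in M. vv i j x = real_cond_exp M (F (j-1)) (\<lambda>x. (D i \<sigma> j x)^2) x"
        unfolding vv_def D_def using lk(5)[OF _ sg'] by simp
      have l1: "0 \<le> lam k" unfolding lam_def using a by simp
      have l2: "lam k * a \<le> 1" unfolding lam_def using a by simp
      show ?thesis using supermart[OF P filt h1 h2 h3 h4 h5 l1 l2, of T] unfolding E_def by simp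
    qed
    define Gf where "Gf x = (\<Sum>k<T. \<Sum>i\<in>UNIV. \<Sum>\<sigma>\<in>{-1,1::real}. E k i \<sigma> x)" for x
    have EI: "integrable M (E k i \<sigma>)" if "\<sigma> \<in> {-1, 1}" for k i \<sigma> using Eint[OF that] by blast
    have EL: "(\<integral>x. E k i \<sigma> x \<partial>M) \<le> 1" if "\<sigma> \<in> {-1, 1}" for k i \<sigma> using Eint[OF that] by blast
    have EI2: "integrable M (\<lambda>x. \<Sum>\<sigma>\<in>{-1,1::real}. E k i \<sigma> x)" for k i
      by (rule Bochner_Integration.integrable_sum) (rule EI)
    have EI3: "integrable M (\<lambda>x. \<Sum>i\<in>UNIV. \<Sum>\<sigma>\<in>{-1,1::real}. E k i \<sigma> x)" for k
      by (rule Bochner_Integration.integrable_sum) (rule EI2)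
    have Gi: "integrable M Gf"
      unfolding Gf_def by (rule Bochner_Integration.integrable_sum) (rule EI3)
    have i3: "(\<integral>x. (\<Sum>\<sigma>\<in>{-1,1::real}. E k i \<sigma> x) \<partial>M) = (\<Sum>\<sigma>\<in>{-1,1::real}. (\<integral>x. E k i \<sigma> x \<partial>M))" for k i
      by (rule Bochner_Integration.integral_sum) (rule EI)
    have i2: "(\<integral>x. (\<Sum>i\<in>UNIV. \<Sum>\<sigma>\<in>{-1,1::real}. E k i \<sigma> x) \<partial>M)
        = (\<Sum>i\<in>UNIV. (\<integral>x. (\<Sum>\<sigma>\<in>{-1,1::real}. E k i \<sigma> x) \<partial>M))" for k
      by (rule Bochner_Integration.integral_sum) (rule EI2)
    have i1: "(\<integral>x. Gf x \<partial>M) = (\<Sum>k<T. (\<integral>x. (\<Sum>i\<in>UNIV. \<Sum>\<sigma>\<in>{-1,1::real}. E k i \<sigma> x) \<partial>M))"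
      unfolding Gf_def by (rule Bochner_Integration.integral_sum) (rule EI3)
    have "(\<integral>x. Gf x \<partial>M) = (\<Sum>k<T. \<Sum>i\<in>UNIV. \<Sum>\<sigma>\<in>{-1,1::real}. (\<integral>x. E k i \<sigma> x \<partial>M))"
    proof -
      have ik: "(\<integral>x. (\<Sum>i\<in>UNIV. \<Sum>\<sigma>\<in>{-1,1::real}. E k i \<sigma> x) \<partial>M)
          = (\<Sum>i\<in>UNIV. \<Sum>\<sigma>\<in>{-1,1::real}. (\<integral>x. E k i \<sigma> x \<partial>M))" for k
      proof -
        have "(\<integral>x. (\<Sum>i\<in>UNIV. \<Sum>\<sigma>\<in>{-1,1::real}. E k i \<sigma> x) \<partial>M)
          = (\<Sum>i\<in>UNIV. (\<integral>x. (\<Sum>\<sigma>\<in>{-1,1::real}. E k i \<sigma> x) \<partial>M))" by (rule i2)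
        also have "\<dots> = (\<Sum>i\<in>UNIV. \<Sum>\<sigma>\<in>{-1,1::real}. (\<integral>x. E k i \<sigma> x \<partial>M))"
          by (rule sum.cong[OF refl]) (rule i3)
        finally show ?thesis .
      qed
      show ?thesis unfolding i1 by (rule sum.cong[OF refl]) (rule ik)
    qed
    also have "\<dots> \<le> (\<Sum>k<T. \<Sum>i\<in>(UNIV::'d set). \<Sum>\<sigma>\<in>{-1,1::real}. 1)"
      by (rule sum_mono)+ (erule EL)
    also have "\<dots> = 2 * d * T" unfolding d_def by simp
    finally have GN: "(\<integral>x. Gf x \<partial>M) \<le> 2 * d * T" .
    have Ele: "E k i \<sigma> x \<le> Gf x" if "k < T" "\<sigma> \<in> {-1, 1}" for k i \<sigma> x
    proof -
      have e1: "E k i \<sigma> x \<le> (\<Sum>\<sigma>'\<in>{-1,1::real}. E k i \<sigma>' x)"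
        by (rule member_le_sum) (use that in \<open>auto simp: E_def\<close>)
      have e2: "(\<Sum>\<sigma>'\<in>{-1,1::real}. E k i \<sigma>' x) \<le> (\<Sum>i'\<in>UNIV. \<Sum>\<sigma>'\<in>{-1,1::real}. E k i' \<sigma>' x)"
        by (rule member_le_sum[of i UNIV "\<lambda>i'. \<Sum>\<sigma>'\<in>{-1,1::real}. E k i' \<sigma>' x"])
          (auto simp: E_def intro: sum_nonneg)
      have e3: "(\<Sum>i'\<in>UNIV. \<Sum>\<sigma>'\<in>{-1,1::real}. E k i' \<sigma>' x) \<le> Gf x"
        unfolding Gf_def
        by (rule member_le_sum[of k "{..<T}" "\<lambda>k. \<Sum>i'\<in>UNIV. \<Sum>\<sigma>'\<in>{-1,1::real}. E k i' \<sigma>' x"])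
          (use that in \<open>auto simp: E_def intro!: sum_nonneg\<close>)
      show ?thesis using e1 e2 e3 by linarith
    qed
    have Gpos: "0 < Gf x" for x
    proof -
      have "0 < E 0 undefined 1 x" unfolding E_def by simp
      also have "\<dots> \<le> Gf x" using T2 by (intro Ele) auto
      finally show ?thesis .
    qed
    define S where "S i x = (\<Sum>j=1..T. (Bm j *v X j x) $ i)" for i x
    define A where "A i x = (\<Sum>j=1..T. vv i j x)" for i x
    have Ys_eq: "Ys x = Max (range (\<lambda>i. \<bar>S i x\<bar>))" for x
      unfolding Ys_def vnorm_inf_def S_def by simp
    have Wn_eq: "Wn x = Max (range (\<lambda>i. \<bar>A i x\<bar>))" for x
      unfolding Wn_def mnorm_diag A_def vv_def by (simp add: diag_entry)
    have vvb: "AE x in M. 0 \<le> vv i j x \<and> vv i j x \<le> a^2" if "j \<ge> 1" for i j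
    proof -
      interpret Sb: sigma_finite_subalgebra M "F (j-1)" using filt_sfs[OF P filt] .
      have Dm: "D i 1 j \<in> borel_measurable M"
        using measurable_from_subalg[OF filt_sub[OF filt] lk(1)[OF that, of 1 i]] unfolding D_def by simp
      have Db: "AE x in M. \<bar>D i 1 j x\<bar> \<le> a" using lk(2)[OF that, of 1 i] unfolding D_def a_def by simp
      have D2b: "AE x in M. norm ((D i 1 j x)^2) \<le> a^2"
        using Db
      proof eventually_elim
        case (elim x)
        then have "\<bar>D i 1 j x\<bar>^2 \<le> a^2" by (intro power_mono) auto
        then show ?case by simp
      qed
      have D2b': "AE x in M. (D i 1 j x)^2 \<le> a^2" using D2b by eventually_elim simp
      have D2i: "integrable M (\<lambda>x. (D i 1 j x)^2)"
        by (rule integrable_const_bound[OF D2b]) (use Dm in simp)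
      have c1: "AE x in M. 0 \<le> real_cond_exp M (F (j-1)) (\<lambda>x. (D i 1 j x)^2) x"
        by (rule Sb.real_cond_exp_pos) (use Dm in auto)
      have c2: "AE x in M. real_cond_exp M (F (j-1)) (\<lambda>x. (D i 1 j x)^2) x \<le> a^2"
        by (rule Sb.real_cond_exp_le_c[OF D2i D2b'])
      have c3: "AE x in M. vv i j x = real_cond_exp M (F (j-1)) (\<lambda>x. (D i 1 j x)^2) x"
        unfolding vv_def D_def using lk(5)[OF that, of 1 i] by simp
      show ?thesis using c1 c2 c3 by eventually_elim simp
    qed
    have AEb1: "AE x in M. \<bar>(Bm j *v X j x) $ i\<bar> \<le> a" if "j \<ge> 1" for j i
      using lk(2)[OF that, of 1 i] unfolding a_def by simp
    have AEb: "AE x in M. \<forall>j\<in>{1..T}. \<forall>i\<in>UNIV. \<bar>(Bm j *v X j x) $ i\<bar> \<le> a \<and> (0 \<le> vv i j x \<and> vv i j x \<le> a^2)"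
      by (intro AE_finite_allI AE_conjI AEb1 vvb) auto
    define G0 where "G0 = 2 * d * T * real T powr p"
    define c where "c = 1 + 2 * ln G0"
    have Tp: "1 \<le> real T powr p" using T2 p2 by (intro ge_one_powr_ge_zero) auto
    have "1 * 1 \<le> (2 * d) * real T" using d1 T2r by (intro mult_mono) auto
    then have dT: "1 \<le> 2 * d * T" by simp
    have "1 * 1 \<le> (2 * d * T) * real T powr p" using Tp dT by (intro mult_mono) auto
    then have G0g: "1 \<le> G0" unfolding G0_def by simp
    have G0p: "0 < G0" using G0g by simp
    have c0: "0 \<le> c" unfolding c_def using G0g by simp
    have key: "AE x in M. (0 \<le> Ys x \<and> Ys x \<le> T * a) \<and> (0 \<le> Wn x \<and> Wn x \<le> T * a^2)
        \<and> (Gf x \<le> G0 \<longrightarrow> Ys x \<le> (sqrt (Wn x) + a) * c)"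
      using AEb
    proof eventually_elim
      case (elim x)
      have Sb: "\<bar>S i x\<bar> \<le> T * a" for i
      proof -
        have "\<bar>S i x\<bar> \<le> (\<Sum>j=1..T. \<bar>(Bm j *v X j x) $ i\<bar>)" unfolding S_def by (rule sum_abs)
        also have "\<dots> \<le> (\<Sum>j=1..T. a)" using elim by (intro sum_mono) auto
        finally show ?thesis by simp
      qed
      have Ab: "0 \<le> A i x \<and> A i x \<le> T * a^2" for i
      proof -
        have "0 \<le> A i x" unfolding A_def using elim by (intro sum_nonneg) auto
        moreover have "A i x \<le> (\<Sum>j=1..T. a^2)" unfolding A_def using elim by (intro sum_mono) auto
        ultimately show ?thesis by simp
      qed
      have WA: "\<bar>A i x\<bar> \<le> Wn x" for i unfolding Wn_eq by (rule Max_ge) auto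
      have W0: "0 \<le> Wn x" using WA[of undefined] by linarith
      have WT: "Wn x \<le> T * a^2" unfolding Wn_eq using Ab by (subst Max_le_iff) auto
      have "\<bar>S undefined x\<bar> \<le> Ys x" unfolding Ys_eq by (rule Max_ge) auto
      then have Y0: "0 \<le> Ys x" by linarith
      have YT: "Ys x \<le> T * a" unfolding Ys_eq using Sb by (subst Max_le_iff) auto
      have hG: "(1 / (a * 2^k)) * \<bar>S i x\<bar> - (1 / (a * 2^k))^2 * A i x \<le> ln (Gf x)" if k: "k < T" for i k
      proof -
        define \<sigma> where "\<sigma> = (if 0 \<le> S i x then 1 else -1::real)"
        have sg: "\<sigma> \<in> {-1,1}" unfolding \<sigma>_def by auto
        have sS: "\<sigma> * S i x = \<bar>S i x\<bar>" unfolding \<sigma>_def by auto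
        have "(\<Sum>j=1..T. D i \<sigma> j x) = \<sigma> * S i x" unfolding D_def S_def by (simp add: sum_distrib_left)
        then have "E k i \<sigma> x = exp ((1 / (a * 2^k)) * \<bar>S i x\<bar> - (1 / (a * 2^k))^2 * A i x)"
          unfolding E_def A_def lam_def using sS by simp
        then have "exp ((1 / (a * 2^k)) * \<bar>S i x\<bar> - (1 / (a * 2^k))^2 * A i x) \<le> Gf x"
          using Ele[OF k sg, of i x] by linarith
        then have "ln (exp ((1 / (a * 2^k)) * \<bar>S i x\<bar> - (1 / (a * 2^k))^2 * A i x)) \<le> ln (Gf x)"
          using Gpos[of x] by (subst ln_le_cancel_iff) auto
        then show ?thesis by simp
      qed
      have Si: "\<bar>S i x\<bar> \<le> (sqrt (Wn x) + a) * (1 + 2 * max 0 (ln (Gf x)))" for i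
      proof (rule pw[OF a W0 _ Sb])
        show "A i x \<le> Wn x" using WA[of i] by linarith
        show "1 \<le> T" using T2 by simp
        show "\<And>k. k < T \<Longrightarrow> 1 / (a * 2 ^ k) * \<bar>S i x\<bar> - (1 / (a * 2 ^ k))\<^sup>2 * A i x \<le> ln (Gf x)"
          by (rule hG)
      qed
      have "Gf x \<le> G0 \<longrightarrow> Ys x \<le> (sqrt (Wn x) + a) * c"
      proof
        assume g: "Gf x \<le> G0"
        have "ln (Gf x) \<le> ln G0" using g Gpos[of x] by simp
        moreover have "0 \<le> ln G0" using G0g by simp
        ultimately have "max 0 (ln (Gf x)) \<le> ln G0" by simp
        then have le: "(sqrt (Wn x) + a) * (1 + 2 * max 0 (ln (Gf x))) \<le> (sqrt (Wn x) + a) * c"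
          unfolding c_def using a W0 by (intro mult_left_mono) auto
        show "Ys x \<le> (sqrt (Wn x) + a) * c" unfolding Ys_eq
          using Si le by (subst Max_le_iff) (auto intro: order_trans)
      qed
      then show ?case using Y0 YT W0 WT by auto
    qed
    have Sm: "(\<lambda>x. S i x) \<in> borel_measurable M" for i
    proof -
      have "(\<lambda>x. (Bm j *v X j x) $ i) \<in> borel_measurable M" if "j \<ge> 1" for j
        using measurable_from_subalg[OF filt_sub[OF filt] lk(1)[OF that, of 1 i]] by simp
      then show ?thesis unfolding S_def by (intro borel_measurable_sum) auto
    qed
    have Am: "(\<lambda>x. A i x) \<in> borel_measurable M" for i
    proof -
      have "vv i j \<in> borel_measurable M" if "j \<ge> 1" for j
        using measurable_from_subalg[OF filt_sub[OF filt] lk(4)[OF that, of 1 i]] unfolding vv_def by simp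
      then show ?thesis unfolding A_def by (intro borel_measurable_sum) auto
    qed
    have Ysm: "Ys \<in> borel_measurable M"
    proof -
      have "(\<lambda>x. Max ((\<lambda>i. \<bar>S i x\<bar>) ` UNIV)) \<in> borel_measurable M"
        by (rule borel_measurable_Max) (auto intro!: borel_measurable_abs Sm)
      moreover have "Ys = (\<lambda>x. Max ((\<lambda>i. \<bar>S i x\<bar>) ` UNIV))" by (rule ext) (rule Ys_eq)
      ultimately show ?thesis by simp
    qed
    have Wnm: "Wn \<in> borel_measurable M"
    proof -
      have "(\<lambda>x. Max ((\<lambda>i. \<bar>A i x\<bar>) ` UNIV)) \<in> borel_measurable M"
        by (rule borel_measurable_Max) (auto intro!: borel_measurable_abs Am)
      moreover have "Wn = (\<lambda>x. Max ((\<lambda>i. \<bar>A i x\<bar>) ` UNIV))" by (rule ext) (rule Wn_eq)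
      ultimately show ?thesis by simp
    qed
    have k1: "AE x in M. 0 \<le> Ys x \<and> Ys x \<le> T * a" using key by eventually_elim simp
    have k2: "AE x in M. 0 \<le> Wn x \<and> Wn x \<le> T * a^2" using key by eventually_elim simp
    have k3: "AE x in M. Gf x \<le> G0 \<longrightarrow> Ys x \<le> (sqrt (Wn x) + a) * c" using key by eventually_elim simp
    have Gnn: "AE x in M. 0 \<le> Gf x" using Gpos by (intro AE_I2) (simp add: less_imp_le)
    have C0N: "(T * a) powr p * (2 * d * T) / G0 \<le> a powr p"
    proof -
      have "(T * a) powr p = real T powr p * a powr p" using a by (simp add: powr_mult)
      moreover have "real T powr p > 0" using T2 by simp
      moreover have "2 * d * T > 0" using dT by simp
      ultimately show ?thesis unfolding G0_def by (simp add: field_simps)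
    qed
    have main: "(\<integral>x. Ys x powr p \<partial>M) powr (1 / p)
        \<le> (2 * c + 1) * ((\<integral>x. Wn x powr (p / 2) \<partial>M) powr (1 / p) + a)"
      by (rule assemble[OF P Ysm Wnm a _ c0 G0p _ k1 k2 Gi GN Gnn k3 C0N]) (use p2 a in auto)
    have cc: "2 * c + 1 \<le> 4 * p * L"
      using const_ineq[OF p2 d1, of "real T"] T2r unfolding c_def G0_def L_def by simp
    have "(2 * c + 1) * ((\<integral>x. Wn x powr (p / 2) \<partial>M) powr (1 / p) + a)
        \<le> 4 * p * L * ((\<integral>x. Wn x powr (p / 2) \<partial>M) powr (1 / p) + a)"
      using cc IW0 a by (intro mult_right_mono) auto
    then have fin: "(\<integral>x. Ys x powr p \<partial>M) powr (1 / p)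
      \<le> 4 * p * L * ((\<integral>x. Wn x powr (p / 2) \<partial>M) powr (1 / p) + B * \<kappa>)"
      using main unfolding a_def by linarith
    show ?thesis using goal_eq fin by blast
  qed
qed

end
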